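(* There exist universal constants $0<c\le C<\infty$ such that for every $1<r\le\infty$ and $n\in\mathbb{N}$, every $f:\{-1,1\}^n\to\mathbb{R}$ satisfies $$c\,Q(f)\le \inf_{g\in \mathscr{P}^n_{>1}} \|f-g\|_{r}\le C\,Q(f),\qquad Q(f)= |\mathbb{E}f|+ \max_{i\in\{1,\ldots,n\}} \big| \widehat{f}(\{i\})\big| + \sqrt{\frac{r-1}{r}} \Big(\sum_{i=1}^n \widehat{f}(\{i\})^2\Big)^{1/2}$$ (with $\frac{r-1}{r}=1$ when $r=\infty$).
   Context: Every $f:\{-1,1\}^n\to\mathbb{R}$ has a unique Fourier–Walsh expansion $f=\sum_{S\subseteq\{1,\dots,n\}}\widehat f(S)w_S$, where $w_S(x)=\prod_{i\in S}x_i$. $\mathscr{P}^n_{>1}=\{f:\{-1,1\}^n\to\mathbb{R}:\ \widehat f(S)=0 \text{ whenever } |S|\le 1\}$. $\|\cdot\|_r$ is the $L_r$ norm and $\mathbb{E}$ the expectation with respect to the uniform probability measure on $\{-1,1\}^n$. *)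

theory Defs
  imports "HOL-Analysis.Analysis"
begin

definition cube :: "nat \<Rightarrow> (nat \<Rightarrow> real) set" where
  "cube n = PiE {1..n} (\<lambda>_. {-1, 1})"

definition expect :: "nat \<Rightarrow> ((nat \<Rightarrow> real) \<Rightarrow> real) \<Rightarrow> real" where
  "expect n h = (\<Sum>x\<in>cube n. h x) / 2 ^ n"

definition walsh :: "nat set \<Rightarrow> (nat \<Rightarrow> real) \<Rightarrow> real" where
  "walsh S x = (\<Prod>i\<in>S. x i)"

definition fourier :: "nat \<Rightarrow> ((nat \<Rightarrow> real) \<Rightarrow> real) \<Rightarrow> nat set \<Rightarrow> real" where
  "fourier n f S = expect n (\<lambda>x. f x * walsh S x)"

definition P_gt1 :: "nat \<Rightarrow> ((nat \<Rightarrow> real) \<Rightarrow> real) set" where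
  "P_gt1 n = {g. \<forall>S. S \<subseteq> {1..n} \<and> card S \<le> 1 \<longrightarrow> fourier n g S = 0}"

definition Lnorm :: "nat \<Rightarrow> ereal \<Rightarrow> ((nat \<Rightarrow> real) \<Rightarrow> real) \<Rightarrow> real" where
  "Lnorm n r h = (if r = \<infinity> then Max ((\<lambda>x. \<bar>h x\<bar>) ` cube n)
                  else (expect n (\<lambda>x. \<bar>h x\<bar> powr real_of_ereal r)) powr (1 / real_of_ereal r))"

definition rfactor :: "ereal \<Rightarrow> real" where
  "rfactor r = (if r = \<infinity> then 1 else (real_of_ereal r - 1) / real_of_ereal r)"

definition Qfun :: "nat \<Rightarrow> ereal \<Rightarrow> ((nat \<Rightarrow> real) \<Rightarrow> real) \<Rightarrow> real" where
  "Qfun n r f = \<bar>expect n f\<bar>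
     + Max (insert 0 ((\<lambda>i. \<bar>fourier n f {i}\<bar>) ` {1..n}))
     + sqrt (rfactor r) * sqrt (\<Sum>i=1..n. (fourier n f {i})\<^sup>2)"

end

theory Submission
  imports Defs "HOL-Probability.Hoeffding"
begin

lemma finite_cube[simp]: "finite (cube n)"
  unfolding cube_def by (auto intro!: finite_PiE)

lemma card_cube: "card (cube n) = 2 ^ n"
  unfolding cube_def by (simp add: card_PiE numeral_2_eq_2)

lemma cube_nonempty[simp]: "cube n \<noteq> {}"
  using card_cube[of n] by (metis card.empty power_not_zero zero_neq_numeral)

lemma cube_coord: "x \<in> cube n \<Longrightarrow> i \<in> {1..n} \<Longrightarrow> x i = 1 \<or> x i = -1"
  unfolding cube_def by (auto simp: PiE_iff extensional_def)

lemma cube_coord_abs: "x \<in> cube n \<Longrightarrow> i \<in> {1..n} \<Longrightarrow> \<bar>x i\<bar> = 1"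
  using cube_coord by fastforce

lemma cube_coord_sq: "x \<in> cube n \<Longrightarrow> i \<in> {1..n} \<Longrightarrow> x i * x i = 1"
  using cube_coord by fastforce

lemma expect_cong: "(\<And>x. x \<in> cube n \<Longrightarrow> f x = g x) \<Longrightarrow> expect n f = expect n g"
  unfolding expect_def by (simp cong: sum.cong)

lemma expect_const[simp]: "expect n (\<lambda>x. c) = c"
  unfolding expect_def by (simp add: card_cube)

lemma expect_add: "expect n (\<lambda>x. f x + g x) = expect n f + expect n g"
  unfolding expect_def by (simp add: sum.distrib add_divide_distrib)

lemma expect_diff: "expect n (\<lambda>x. f x - g x) = expect n f - expect n g"
  unfolding expect_def by (simp add: sum_subtractf diff_divide_distrib)

lemma expect_cmult: "expect n (\<lambda>x. c * f x) = c * expect n f"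
  unfolding expect_def by (simp add: sum_distrib_left)

lemma expect_multc: "expect n (\<lambda>x. f x * c) = expect n f * c"
  unfolding expect_def by (simp add: sum_distrib_right)

lemma expect_sum: "finite I \<Longrightarrow> expect n (\<lambda>x. \<Sum>i\<in>I. f i x) = (\<Sum>i\<in>I. expect n (f i))"
  unfolding expect_def by (metis (no_types) sum.swap sum_divide_distrib)

lemma expect_mono: "(\<And>x. x \<in> cube n \<Longrightarrow> f x \<le> g x) \<Longrightarrow> expect n f \<le> expect n g"
  unfolding expect_def by (intro divide_right_mono sum_mono) auto

lemma expect_nonneg: "(\<And>x. x \<in> cube n \<Longrightarrow> 0 \<le> f x) \<Longrightarrow> 0 \<le> expect n f"
  using expect_mono[of n "\<lambda>_. 0" f] by simp

lemma expect_abs: "\<bar>expect n f\<bar> \<le> expect n (\<lambda>x. \<bar>f x\<bar>)"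
  unfolding expect_def by (simp add: sum_abs divide_right_mono)

lemma expect_zero_nonneg:
  assumes "\<And>x. x \<in> cube n \<Longrightarrow> 0 \<le> f x" "expect n f = 0" "x \<in> cube n"
  shows "f x = 0"
proof -
  have "sum f (cube n) = 0" using assms(2) unfolding expect_def by simp
  thus ?thesis using assms(1,3) sum_nonneg_eq_0_iff[of "cube n" f] by auto
qed

lemma expect_prod:
  "expect n (\<lambda>x. \<Prod>i\<in>{1..n}. \<phi> i (x i)) = (\<Prod>i\<in>{1..n}. (\<phi> i 1 + \<phi> i (-1)) / 2)"
proof -
  have "(\<Prod>i\<in>{1..n}. \<Sum>y\<in>{-1,1::real}. \<phi> i y) = (\<Sum>g\<in>cube n. \<Prod>i\<in>{1..n}. \<phi> i (g i))"
    unfolding cube_def by (rule prod_sum_PiE) auto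
  moreover have "(\<Prod>i\<in>{1..n}. (\<phi> i 1 + \<phi> i (-1)) / 2) = (\<Prod>i\<in>{1..n}. \<Sum>y\<in>{-1,1::real}. \<phi> i y) / 2 ^ n"
    by (simp add: prod_dividef add.commute)
  ultimately show ?thesis unfolding expect_def by simp
qed

lemma flip_in_cube: "x \<in> cube n \<Longrightarrow> i \<in> {1..n} \<Longrightarrow> x(i := - x i) \<in> cube n"
  unfolding cube_def by (auto simp: PiE_iff extensional_def)

lemma expect_flip:
  assumes i: "i \<in> {1..n}" and F: "\<And>x. x \<in> cube n \<Longrightarrow> F (x(i := - x i)) = F x"
  shows "expect n (\<lambda>x. x i * F x) = 0"
proof -
  let ?s = "\<lambda>x. x(i := - x i)"
  have "(\<Sum>x\<in>cube n. x i * F x) = (\<Sum>x\<in>cube n. ?s x i * F (?s x))"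
    by (rule sum.reindex_bij_witness[of _ ?s ?s]) (auto simp: flip_in_cube[OF _ i])
  also have "\<dots> = - (\<Sum>x\<in>cube n. x i * F x)"
    by (simp add: F sum_negf[symmetric])
  finally have "(\<Sum>x\<in>cube n. x i * F x) = 0" by simp
  thus ?thesis unfolding expect_def by simp
qed

lemma expect_coord: "i \<in> {1..n} \<Longrightarrow> expect n (\<lambda>x. x i) = 0"
  using expect_flip[of i n "\<lambda>_. 1"] by simp

lemma walsh_empty[simp]: "walsh {} x = 1" by (simp add: walsh_def)
lemma walsh_single[simp]: "walsh {i} x = x i" by (simp add: walsh_def)

lemma fourier_empty: "fourier n f {} = expect n f"
  by (simp add: fourier_def)
lemma fourier_single: "fourier n f {i} = expect n (\<lambda>x. f x * x i)"
  by (simp add: fourier_def)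

lemma fourier_diff: "fourier n (\<lambda>x. f x - g x) S = fourier n f S - fourier n g S"
  unfolding fourier_def by (simp add: left_diff_distrib expect_diff)

lemma card_le1_cases: "card S \<le> 1 \<Longrightarrow> finite S \<Longrightarrow> S = {} \<or> (\<exists>i. S = {i})"
  by (metis One_nat_def card_0_eq card_1_singletonE le_SucE le_zero_eq)

lemma zero_in_P: "(\<lambda>x. 0) \<in> P_gt1 n"
  by (simp add: P_gt1_def fourier_def expect_def)

lemma cosh_le_exp: "(exp x + exp (- x)) / 2 \<le> exp (x^2 / 2)" for x :: real
proof -
  have key: "(exp y + exp (- y)) / 2 \<le> exp (y^2 / 2)" if "y \<ge> 0" for y :: real
  proof -
    have e: "1 + (1/2) * (exp (2*y) - 1) = (1 + exp (2*y)) / 2" by (simp add: field_simps)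
    have "-(2*y) * (1/2) + ln ((1 + exp (2*y)) / 2) \<le> (2*y)\<^sup>2 / 8"
      using Hoeffdings_lemma_aux[of "2*y" "1/2", unfolded e] that by simp
    moreover have "(2*y)\<^sup>2 / 8 = y^2/2" by (simp add: power2_eq_square)
    ultimately have "ln ((1 + exp (2*y)) / 2) \<le> y^2/2 + y"
      by simp
    hence "(1 + exp (2*y)) / 2 \<le> exp (y^2/2 + y)"
    proof -
      have pos: "0 < (1 + exp (2*y))/2" by (simp add: add_pos_pos)
      have "exp (ln ((1 + exp (2*y)) / 2)) \<le> exp (y^2/2 + y)" using \<open>ln _ \<le> _\<close> by simp
      thus ?thesis by (simp only: exp_ln[OF pos])
    qed
    hence "(1 + exp (2*y)) / 2 * exp (-y) \<le> exp (y^2/2 + y) * exp (-y)"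
      by (rule mult_right_mono) simp
    moreover have "(1 + exp (2*y)) / 2 * exp (-y) = (exp y + exp (- y)) / 2"
      by (simp add: field_simps flip: exp_add) 
    moreover have "exp (y^2/2 + y) * exp (-y) = exp (y^2/2)"
      by (simp flip: exp_add)
    ultimately show ?thesis by simp
  qed
  show ?thesis
  proof (cases "x \<ge> 0")
    case True thus ?thesis using key by blast
  next
    case False thus ?thesis using key[of "-x"] by (simp add: add.commute)
  qed
qed

lemma expect_holder:
  assumes pq: "p > 1" "q > 1" "1/p + 1/q = 1"
    and u: "\<And>x. x \<in> cube n \<Longrightarrow> u x \<ge> 0" and v: "\<And>x. x \<in> cube n \<Longrightarrow> v x \<ge> 0"
  shows "expect n (\<lambda>x. u x * v x) \<le>
    expect n (\<lambda>x. u x powr p) powr (1/p) * expect n (\<lambda>x. v x powr q) powr (1/q)"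
proof -
  define A where "A = expect n (\<lambda>x. u x powr p)"
  define B where "B = expect n (\<lambda>x. v x powr q)"
  have A0: "A \<ge> 0" unfolding A_def by (rule expect_nonneg) simp
  have B0: "B \<ge> 0" unfolding B_def by (rule expect_nonneg) simp
  show ?thesis
  proof (cases "A = 0 \<or> B = 0")
    case True
    have z: "u x * v x = 0" if x: "x \<in> cube n" for x
    proof (cases "A = 0")
      case True
      have "u x powr p = 0"
        using expect_zero_nonneg[of n "\<lambda>x. u x powr p" x] True x unfolding A_def by simp
      thus ?thesis by simp
    next
      case False
      hence "B = 0" using \<open>A = 0 \<or> B = 0\<close> by simp
      have "v x powr q = 0"
        using expect_zero_nonneg[of n "\<lambda>x. v x powr q" x] \<open>B = 0\<close> x unfolding B_def by simp
      thus ?thesis by simp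
    qed
    have "expect n (\<lambda>x. u x * v x) = expect n (\<lambda>x. 0)"
      by (rule expect_cong) (rule z)
    thus ?thesis by simp
  next
    case False
    hence Ap: "A > 0" and Bp: "B > 0" using A0 B0 by auto
    define \<alpha> where "\<alpha> = A powr (1/p)"
    define \<beta> where "\<beta> = B powr (1/q)"
    have ap: "\<alpha> > 0" and bp: "\<beta> > 0" using Ap Bp by (auto simp: \<alpha>_def \<beta>_def)
    have ap': "\<alpha> powr p = A" using Ap pq by (simp add: \<alpha>_def powr_powr)
    have bp': "\<beta> powr q = B" using Bp pq by (simp add: \<beta>_def powr_powr)
    have pt: "u x * v x / (\<alpha> * \<beta>) \<le> (u x powr p / A) / p + (v x powr q / B) / q"
      if x: "x \<in> cube n" for x
    proof -
      have "(u x / \<alpha>) * (v x / \<beta>) \<le> (u x / \<alpha>) powr p / p + (v x / \<beta>) powr q / q"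
        by (rule Youngs_inequality) (use pq u[OF x] v[OF x] ap bp in auto)
      also have "(u x / \<alpha>) powr p = u x powr p / A"
        using u[OF x] ap by (simp add: powr_divide ap')
      also have "(v x / \<beta>) powr q = v x powr q / B"
        using v[OF x] bp by (simp add: powr_divide bp')
      finally show ?thesis by simp
    qed
    have "expect n (\<lambda>x. u x * v x / (\<alpha> * \<beta>)) \<le> expect n (\<lambda>x. (u x powr p / A) / p + (v x powr q / B) / q)"
      by (rule expect_mono) (rule pt)
    also have "\<dots> = (A / A) / p + (B / B) / q"
      by (simp add: expect_add divide_inverse expect_multc A_def B_def)
    also have "\<dots> = 1" using Ap Bp pq by simp
    finally have "expect n (\<lambda>x. u x * v x) / (\<alpha> * \<beta>) \<le> 1"
      by (simp add: divide_inverse expect_multc)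
    hence "expect n (\<lambda>x. u x * v x) \<le> \<alpha> * \<beta>" using ap bp by (simp add: divide_le_eq)
    thus ?thesis by (simp add: \<alpha>_def \<beta>_def A_def B_def)
  qed
qed

lemma expect_jensen:
  assumes p: "p > 1" and u: "\<And>x. x \<in> cube n \<Longrightarrow> u x \<ge> 0"
  shows "expect n u \<le> expect n (\<lambda>x. u x powr p) powr (1/p)"
proof -
  define q where "q = p / (p - 1)"
  have "p - 1 > 0" using p by simp
  have q: "q > 1" "1/p + 1/q = 1" using p \<open>p - 1 > 0\<close> by (simp_all add: q_def field_simps)
  have "expect n (\<lambda>x. u x * 1) \<le> expect n (\<lambda>x. u x powr p) powr (1/p) * expect n (\<lambda>x. 1 powr q) powr (1/q)"
    by (rule expect_holder[OF p q]) (auto intro: u)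
  thus ?thesis by simp
qed

lemma Lnorm_fin: "Lnorm n (ereal \<rho>) h = expect n (\<lambda>x. \<bar>h x\<bar> powr \<rho>) powr (1/\<rho>)"
  by (simp add: Lnorm_def)

lemma Lnorm_inf: "Lnorm n \<infinity> h = Max ((\<lambda>x. \<bar>h x\<bar>) ` cube n)"
  by (simp add: Lnorm_def)

lemma Lnorm_nonneg: "Lnorm n r h \<ge> 0"
proof (cases "r = \<infinity>")
  case True
  obtain x where "x \<in> cube n" using cube_nonempty by blast
  hence "\<bar>h x\<bar> \<le> Max ((\<lambda>x. \<bar>h x\<bar>) ` cube n)" by (intro Max_ge) auto
  thus ?thesis using True by (simp add: Lnorm_inf)
next
  case False thus ?thesis by (simp add: Lnorm_def)
qed

lemma L1_le_Lnorm:
  assumes "1 < r"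
  shows "expect n (\<lambda>x. \<bar>h x\<bar>) \<le> Lnorm n r h"
proof (cases r)
  case (real \<rho>)
  hence "\<rho> > 1" using assms by simp
  thus ?thesis using real expect_jensen[of \<rho> n "\<lambda>x. \<bar>h x\<bar>"] by (simp add: Lnorm_fin)
next
  case PInf
  have "expect n (\<lambda>x. \<bar>h x\<bar>) \<le> expect n (\<lambda>x. Max ((\<lambda>x. \<bar>h x\<bar>) ` cube n))"
    by (rule expect_mono) (intro Max_ge, auto)
  thus ?thesis using PInf by (simp add: Lnorm_inf)
next
  case MInf thus ?thesis using assms by simp
qed

lemma Lnorm_le_const:
  assumes "1 < r" "K \<ge> 0" "\<And>x. x \<in> cube n \<Longrightarrow> \<bar>h x\<bar> \<le> K"
  shows "Lnorm n r h \<le> K"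
proof (cases r)
  case (real \<rho>)
  hence rho: "\<rho> > 1" using assms by simp
  have "expect n (\<lambda>x. \<bar>h x\<bar> powr \<rho>) \<le> expect n (\<lambda>x. K powr \<rho>)"
    by (rule expect_mono) (use assms rho in \<open>auto intro: powr_mono2\<close>)
  hence "expect n (\<lambda>x. \<bar>h x\<bar> powr \<rho>) powr (1/\<rho>) \<le> (K powr \<rho>) powr (1/\<rho>)"
    by (intro powr_mono2) (use rho in \<open>auto intro!: expect_nonneg\<close>)
  also have "\<dots> = K" using rho assms(2) by (simp add: powr_powr)
  finally show ?thesis using real by (simp add: Lnorm_fin)
next
  case PInf
  thus ?thesis using assms by (simp add: Lnorm_inf)
next
  case MInf thus ?thesis using assms by simp
qed

lemma Lnorm_le_fin:
  assumes rho: "\<rho> > 0" and K: "K \<ge> 0" and G: "\<And>x. x \<in> cube n \<Longrightarrow> G x \<ge> 0"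
    and hG: "\<And>x. x \<in> cube n \<Longrightarrow> \<bar>h x\<bar> \<le> K * G x"
    and D: "expect n (\<lambda>x. G x powr \<rho>) \<le> D"
  shows "Lnorm n (ereal \<rho>) h \<le> K * D powr (1/\<rho>)"
proof -
  have "expect n (\<lambda>x. \<bar>h x\<bar> powr \<rho>) \<le> expect n (\<lambda>x. (K * G x) powr \<rho>)"
    by (rule expect_mono) (use assms in \<open>auto intro: powr_mono2\<close>)
  also have "\<dots> = K powr \<rho> * expect n (\<lambda>x. G x powr \<rho>)"
    using K G by (simp add: powr_mult expect_cmult cong: expect_cong)
  also have "\<dots> \<le> K powr \<rho> * D" by (rule mult_left_mono[OF D]) simp
  finally have "expect n (\<lambda>x. \<bar>h x\<bar> powr \<rho>) powr (1/\<rho>) \<le> (K powr \<rho> * D) powr (1/\<rho>)"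
    by (intro powr_mono2) (use rho in \<open>auto intro!: expect_nonneg\<close>)
  also have "\<dots> = K * D powr (1/\<rho>)"
  proof -
    have "D \<ge> 0" using D expect_nonneg[of n "\<lambda>x. G x powr \<rho>"] by force
    thus ?thesis using K rho by (simp add: powr_mult powr_powr)
  qed
  finally show ?thesis by (simp add: Lnorm_fin)
qed

definition lin :: "nat \<Rightarrow> (nat \<Rightarrow> real) \<Rightarrow> (nat \<Rightarrow> real) \<Rightarrow> real" where
  "lin n b x = (\<Sum>i\<in>{1..n}. b i * x i)"

lemma exp_moment:
  "expect n (\<lambda>x. exp (t * lin n b x)) \<le> exp (t^2 * (\<Sum>i\<in>{1..n}. (b i)^2) / 2)"
proof -
  have "expect n (\<lambda>x. exp (t * lin n b x)) = expect n (\<lambda>x. \<Prod>i\<in>{1..n}. exp (t * b i * x i))"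
    unfolding lin_def by (simp add: sum_distrib_left exp_sum mult.assoc)
  also have "\<dots> = (\<Prod>i\<in>{1..n}. (exp (t * b i * 1) + exp (t * b i * (-1))) / 2)"
    by (rule expect_prod)
  also have "\<dots> \<le> (\<Prod>i\<in>{1..n}. exp ((t * b i)^2 / 2))"
  proof (rule prod_mono)
    fix i
    show "0 \<le> (exp (t * b i * 1) + exp (t * b i * (-1))) / 2 \<and>
      (exp (t * b i * 1) + exp (t * b i * (-1))) / 2 \<le> exp ((t * b i)^2 / 2)"
      using cosh_le_exp[of "t * b i"] by (simp add: add_nonneg_nonneg)
  qed
  also have "\<dots> = exp (\<Sum>i\<in>{1..n}. (t * b i)^2 / 2)"
    by (simp add: exp_sum)
  also have "(\<Sum>i\<in>{1..n}. (t * b i)^2 / 2) = t^2 * (\<Sum>i\<in>{1..n}. (b i)^2) / 2"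
    by (simp add: power_mult_distrib sum_distrib_left sum_divide_distrib)
  finally show ?thesis .
qed

lemma pow_le_exp:
  fixes y t p :: real
  assumes "y \<ge> 0" "t > 0" "p > 0"
  shows "y powr p \<le> (p / t) powr p * exp (t * y)"
proof (cases "y = 0")
  case True thus ?thesis by simp
next
  case False
  define z where "z = t * y / p"
  have z: "z > 0" using assms False by (simp add: z_def)
  have y: "y = (p / t) * z" using assms by (simp add: z_def field_simps)
  have "z powr p = exp (p * ln z)" using z by (simp add: powr_def)
  also have "\<dots> \<le> exp (p * (z - 1))"
    using ln_le_minus_one[OF z] assms(3) by (simp add: mult_left_mono)
  also have "\<dots> \<le> exp (p * z)" using assms(3) by simp
  also have "p * z = t * y" using assms by (simp add: z_def)
  finally have "z powr p \<le> exp (t * y)" .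
  hence "(p / t) powr p * z powr p \<le> (p / t) powr p * exp (t * y)"
    by (rule mult_left_mono) simp
  moreover have "y powr p = (p / t) powr p * z powr p"
    unfolding y by (rule powr_mult)
  ultimately show ?thesis by simp
qed

lemma khintchine:
  assumes p: "p \<ge> 1"
  shows "expect n (\<lambda>x. \<bar>lin n b x\<bar> powr p) powr (1/p) \<le> 6 * sqrt p * sqrt (\<Sum>i\<in>{1..n}. (b i)^2)"
proof -
  define B2 where "B2 = (\<Sum>i\<in>{1..n}. (b i)^2)"
  have B2: "B2 \<ge> 0" unfolding B2_def by (simp add: sum_nonneg)
  show ?thesis
  proof (cases "B2 = 0")
    case True
    hence "\<forall>i\<in>{1..n}. b i = 0" unfolding B2_def
      using sum_nonneg_eq_0_iff[of "{1..n}" "\<lambda>i. (b i)^2"] by simp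
    hence "\<And>x. lin n b x = 0" unfolding lin_def by simp
    thus ?thesis using p by (simp add: sum_nonneg)
  next
    case False
    hence B2p: "B2 > 0" using B2 by simp
    define t where "t = sqrt p / sqrt B2"
    have tp: "t > 0" using B2p p by (simp add: t_def)
    have pt: "p / t = sqrt p * sqrt B2"
      using B2p p by (simp add: t_def field_simps)
    have t2: "t^2 * B2 / 2 = p / 2" using B2p p by (simp add: t_def power_divide)
    have "expect n (\<lambda>x. \<bar>lin n b x\<bar> powr p) \<le>
        expect n (\<lambda>x. (p / t) powr p * (exp (t * lin n b x) + exp ((-t) * lin n b x)))"
    proof (rule expect_mono)
      fix x
      have "\<bar>lin n b x\<bar> powr p \<le> (p / t) powr p * exp (t * \<bar>lin n b x\<bar>)"
        by (rule pow_le_exp) (use tp p in auto)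
      also have "exp (t * \<bar>lin n b x\<bar>) \<le> exp (t * lin n b x) + exp ((-t) * lin n b x)"
        by (cases "lin n b x \<ge> 0") (auto simp: add_increasing add_increasing2)
      hence "(p / t) powr p * exp (t * \<bar>lin n b x\<bar>) \<le> (p / t) powr p * (exp (t * lin n b x) + exp ((-t) * lin n b x))"
        by (rule mult_left_mono) simp
      finally show "\<bar>lin n b x\<bar> powr p \<le> (p / t) powr p * (exp (t * lin n b x) + exp ((-t) * lin n b x))" .
    qed
    also have "\<dots> = (p / t) powr p * (expect n (\<lambda>x. exp (t * lin n b x)) + expect n (\<lambda>x. exp ((-t) * lin n b x)))"
      by (simp add: expect_cmult expect_add)
    also have "\<dots> \<le> (p / t) powr p * (exp (t^2 * B2 / 2) + exp ((-t)^2 * B2 / 2))"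
    proof -
      have m1: "expect n (\<lambda>x. exp (t * lin n b x)) \<le> exp (t^2 * B2 / 2)"
        unfolding B2_def by (rule exp_moment)
      have m2: "expect n (\<lambda>x. exp ((-t) * lin n b x)) \<le> exp ((-t)^2 * B2 / 2)"
        unfolding B2_def by (rule exp_moment)
      show ?thesis by (intro mult_left_mono add_mono m1 m2) simp
    qed
    also have "\<dots> = (sqrt p * sqrt B2) powr p * (2 * exp (p / 2))"
      using t2 pt by simp
    finally have E: "expect n (\<lambda>x. \<bar>lin n b x\<bar> powr p) \<le> (sqrt p * sqrt B2) powr p * (2 * exp (p / 2))" .
    have "expect n (\<lambda>x. \<bar>lin n b x\<bar> powr p) powr (1/p) \<le> ((sqrt p * sqrt B2) powr p * (2 * exp (p / 2))) powr (1/p)"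
      by (rule powr_mono2) (use E p in \<open>auto intro!: expect_nonneg\<close>)
    also have "\<dots> = (sqrt p * sqrt B2) * (2 powr (1/p) * exp (1/2))"
      using p B2 by (simp add: powr_mult powr_powr exp_powr_real)
    also have "\<dots> \<le> (sqrt p * sqrt B2) * (2 * 3)"
    proof (rule mult_left_mono)
      have "2 powr (1/p) \<le> 2 powr 1" using p by (intro powr_mono) auto
      moreover have "exp (1/2) \<le> (3::real)" proof -
        have "exp (1/2) \<le> exp (1::real)" by simp
        thus ?thesis using exp_le by linarith
      qed
      ultimately show "2 powr (1/p) * exp (1/2) \<le> 2 * (3::real)"
        by (intro mult_mono) auto
    qed (use p B2 in simp)
    finally show ?thesis by (simp add: B2_def)
  qed
qed

lemma P_gt1_empty: "g \<in> P_gt1 n \<Longrightarrow> expect n g = 0"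
  unfolding P_gt1_def using fourier_empty[of n g] by force

lemma P_gt1_single: "g \<in> P_gt1 n \<Longrightarrow> i \<in> {1..n} \<Longrightarrow> fourier n g {i} = 0"
  unfolding P_gt1_def by force

lemma sqrt_le_from_sq:
  fixes B2 K :: real
  assumes "B2 \<ge> 0" "B2 \<le> K * sqrt B2" "K \<ge> 0"
  shows "sqrt B2 \<le> K"
proof (cases "B2 = 0")
  case True
  have "0 \<le> K * sqrt B2" using assms True by simp
  thus ?thesis using True assms(3) by simp
next
  case False
  hence sp: "sqrt B2 > 0" using assms by simp
  have "sqrt B2 * sqrt B2 \<le> K * sqrt B2" using assms by simp
  from this sp show ?thesis by (rule mult_right_le_imp_le)
qed

lemma lower:
  assumes r: "1 < r" and g: "g \<in> P_gt1 n"
  shows "Qfun n r f \<le> 11 * Lnorm n r (\<lambda>x. f x - g x)"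
proof -
  define h where "h = (\<lambda>x. f x - g x)"
  define L where "L = Lnorm n r h"
  define E1 where "E1 = expect n (\<lambda>x. \<bar>h x\<bar>)"
  define b where "b = (\<lambda>i. fourier n f {i})"
  define B2 where "B2 = (\<Sum>i\<in>{1..n}. (b i)^2)"
  have E1L: "E1 \<le> L" unfolding E1_def L_def by (rule L1_le_Lnorm[OF r])
  have Eh: "expect n h = expect n f"
    using P_gt1_empty[OF g] by (simp add: h_def expect_diff)
  have a: "\<bar>expect n f\<bar> \<le> E1" unfolding E1_def Eh[symmetric] by (rule expect_abs)
  have bh: "b i = expect n (\<lambda>x. h x * x i)" if "i \<in> {1..n}" for i
    using P_gt1_single[OF g that] fourier_diff[of n f g "{i}"]
    by (simp add: b_def h_def fourier_single)
  have bi: "\<bar>b i\<bar> \<le> E1" if i: "i \<in> {1..n}" for i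
  proof -
    have "\<bar>b i\<bar> \<le> expect n (\<lambda>x. \<bar>h x * x i\<bar>)" unfolding bh[OF i] by (rule expect_abs)
    also have "\<dots> = E1" unfolding E1_def
      by (rule expect_cong) (simp add: abs_mult cube_coord_abs[OF _ i])
    finally show ?thesis .
  qed
  have M: "Max (insert 0 ((\<lambda>i. \<bar>fourier n f {i}\<bar>) ` {1..n})) \<le> E1"
    using bi E1L unfolding b_def
    by (intro Max.boundedI) (auto simp: E1_def intro!: expect_nonneg)
  have hl: "expect n (\<lambda>x. h x * lin n b x) = B2"
  proof -
    have "expect n (\<lambda>x. h x * lin n b x) = expect n (\<lambda>x. \<Sum>i\<in>{1..n}. b i * (h x * x i))"
      unfolding lin_def by (simp add: sum_distrib_left mult.left_commute)
    also have "\<dots> = (\<Sum>i\<in>{1..n}. b i * expect n (\<lambda>x. h x * x i))"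
      by (simp add: expect_sum expect_cmult)
    also have "\<dots> = B2" unfolding B2_def by (rule sum.cong) (auto simp: bh power2_eq_square)
    finally show ?thesis .
  qed
  have B2le: "B2 \<le> expect n (\<lambda>x. \<bar>h x\<bar> * \<bar>lin n b x\<bar>)"
  proof -
    have "B2 \<le> \<bar>expect n (\<lambda>x. h x * lin n b x)\<bar>" using hl by simp
    also have "\<dots> \<le> expect n (\<lambda>x. \<bar>h x * lin n b x\<bar>)" by (rule expect_abs)
    finally show ?thesis by (simp add: abs_mult)
  qed
  have B20: "B2 \<ge> 0" unfolding B2_def by (simp add: sum_nonneg)
  have third: "sqrt (rfactor r) * sqrt B2 \<le> 9 * L"
  proof (cases r)
    case PInf
    have hle: "\<bar>h x\<bar> \<le> L" if "x \<in> cube n" for x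
      using that PInf by (simp add: L_def Lnorm_inf)
    have "B2 \<le> expect n (\<lambda>x. L * \<bar>lin n b x\<bar>)"
      using B2le by (meson order_trans expect_mono mult_right_mono abs_ge_zero hle)
    also have "\<dots> = L * expect n (\<lambda>x. \<bar>lin n b x\<bar>)" by (rule expect_cmult)
    also have "\<dots> \<le> L * (expect n (\<lambda>x. \<bar>lin n b x\<bar> powr 2) powr (1/2))"
      by (intro mult_left_mono expect_jensen) (auto simp: L_def Lnorm_nonneg)
    also have "\<dots> \<le> L * (6 * sqrt 2 * sqrt B2)"
      by (intro mult_left_mono) (auto simp: L_def Lnorm_nonneg B2_def intro: khintchine[of 2, simplified])
    finally have "B2 \<le> (L * 6 * sqrt 2) * sqrt B2" by (simp add: mult_ac)
    hence "sqrt B2 \<le> L * 6 * sqrt 2" by (rule sqrt_le_from_sq[OF B20]) (simp add: L_def Lnorm_nonneg)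
    also have "\<dots> \<le> L * 6 * 1.5"
      by (intro mult_left_mono real_le_lsqrt) (auto simp: L_def Lnorm_nonneg power2_eq_square)
    finally show ?thesis using PInf by (simp add: rfactor_def)
  next
    case (real \<rho>)
    hence rho: "\<rho> > 1" using r by simp
    define q where "q = \<rho> / (\<rho> - 1)"
    have "\<rho> - 1 > 0" using rho by simp
    have q: "q > 1" "1/\<rho> + 1/q = 1" using rho \<open>\<rho> - 1 > 0\<close> by (simp_all add: q_def field_simps)
    have "B2 \<le> expect n (\<lambda>x. \<bar>h x\<bar> powr \<rho>) powr (1/\<rho>) * expect n (\<lambda>x. \<bar>lin n b x\<bar> powr q) powr (1/q)"
      using B2le expect_holder[OF rho q, of n "\<lambda>x. \<bar>h x\<bar>" "\<lambda>x. \<bar>lin n b x\<bar>"] by simp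
    also have "\<dots> \<le> L * (6 * sqrt q * sqrt B2)"
    proof -
      have kq: "expect n (\<lambda>x. \<bar>lin n b x\<bar> powr q) powr (1/q) \<le> 6 * sqrt q * sqrt B2"
        unfolding B2_def by (rule khintchine) (use q in simp)
      show ?thesis by (intro mult_mono kq) (use q real in \<open>auto simp: L_def Lnorm_fin\<close>)
    qed
    finally have "B2 \<le> (L * 6 * sqrt q) * sqrt B2" by (simp add: mult_ac)
    hence "sqrt B2 \<le> L * 6 * sqrt q" by (rule sqrt_le_from_sq[OF B20]) (use q in \<open>simp add: L_def Lnorm_nonneg\<close>)
    hence "sqrt (rfactor r) * sqrt B2 \<le> sqrt (rfactor r) * (L * 6 * sqrt q)"
      by (rule mult_left_mono) (use real rho in \<open>simp add: rfactor_def\<close>)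
    also have "sqrt (rfactor r) * sqrt q = 1"
      using real rho \<open>\<rho> - 1 > 0\<close> by (simp add: rfactor_def q_def real_sqrt_mult[symmetric])
    hence "sqrt (rfactor r) * (L * 6 * sqrt q) = 6 * L" by (simp add: mult_ac)
    finally show ?thesis using Lnorm_nonneg[of n r h] by (simp add: L_def)
  next
    case MInf thus ?thesis using r by simp
  qed
  have "Qfun n r f \<le> E1 + E1 + 9 * L"
    unfolding Qfun_def using a M third[unfolded B2_def b_def] by linarith
  also have "\<dots> \<le> 11 * L" using E1L by simp
  finally show ?thesis by (simp add: L_def h_def)
qed

lemma young_pt:
  fixes R S \<rho> :: real
  assumes R: "R \<ge> 0" and S: "S > 0" and rho: "1 < \<rho>" "\<rho> \<le> 2"
  shows "R powr \<rho> \<le> (2 - \<rho>) * (R * S powr (\<rho> - 1)) + (\<rho> - 1) * (R^2 * S powr (\<rho> - 2))"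
proof (cases "R = 0")
  case True thus ?thesis using rho by simp
next
  case False
  hence Rp: "R > 0" using R by simp
  have a0: "0 < R * S powr (\<rho> - 1)" using Rp S by simp
  have b0: "0 < R^2 * S powr (\<rho> - 2)" using Rp S by simp
  have w: "0 \<le> 2 - \<rho>" "0 \<le> \<rho> - 1" "(2 - \<rho>) + (\<rho> - 1) = 1" using rho by auto
  have Y: "(R * S powr (\<rho> - 1)) powr (2 - \<rho>) * (R^2 * S powr (\<rho> - 2)) powr (\<rho> - 1)
      \<le> (2 - \<rho>) * (R * S powr (\<rho> - 1)) + (\<rho> - 1) * (R^2 * S powr (\<rho> - 2))"
    by (rule Youngs_inequality_0[OF w a0 b0])
  have p1: "(R * S powr (\<rho> - 1)) powr (2 - \<rho>) = R powr (2 - \<rho>) * S powr ((\<rho> - 1) * (2 - \<rho>))"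
  proof -
    have "(R * S powr (\<rho> - 1)) powr (2 - \<rho>) = R powr (2 - \<rho>) * (S powr (\<rho> - 1)) powr (2 - \<rho>)"
      using Rp S by (intro powr_mult)
    also have "(S powr (\<rho> - 1)) powr (2 - \<rho>) = S powr ((\<rho> - 1) * (2 - \<rho>))"
      by (simp add: powr_powr)
    finally show ?thesis .
  qed
  have p2: "(R^2 * S powr (\<rho> - 2)) powr (\<rho> - 1) = R powr (2 * (\<rho> - 1)) * S powr ((\<rho> - 2) * (\<rho> - 1))"
  proof -
    have "(R^2 * S powr (\<rho> - 2)) powr (\<rho> - 1) = (R^2) powr (\<rho> - 1) * (S powr (\<rho> - 2)) powr (\<rho> - 1)"
      using Rp S by (intro powr_mult)
    also have "(R^2) powr (\<rho> - 1) = R powr (2 * (\<rho> - 1))"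
    proof -
      have "R powr 2 = R^2" using Rp by (simp add: powr_numeral)
      hence "(R^2) powr (\<rho> - 1) = (R powr 2) powr (\<rho> - 1)" by simp
      also have "\<dots> = R powr (2 * (\<rho> - 1))" by (simp only: powr_powr)
      finally show ?thesis .
    qed
    also have "(S powr (\<rho> - 2)) powr (\<rho> - 1) = S powr ((\<rho> - 2) * (\<rho> - 1))"
      by (simp add: powr_powr)
    finally show ?thesis .
  qed
  have e1: "R powr (2 - \<rho>) * R powr (2 * (\<rho> - 1)) = R powr \<rho>"
  proof -
    have "(2 - \<rho>) + 2 * (\<rho> - 1) = \<rho>" by simp
    thus ?thesis by (simp only: powr_add[symmetric])
  qed
  have e2: "S powr ((\<rho> - 1) * (2 - \<rho>)) * S powr ((\<rho> - 2) * (\<rho> - 1)) = 1"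
  proof -
    have "(\<rho> - 1) * (2 - \<rho>) + (\<rho> - 2) * (\<rho> - 1) = 0" by (simp add: algebra_simps)
    hence "S powr ((\<rho> - 1) * (2 - \<rho>)) * S powr ((\<rho> - 2) * (\<rho> - 1)) = S powr 0"
      by (simp only: powr_add[symmetric])
    thus ?thesis using S by simp
  qed
  have "(R * S powr (\<rho> - 1)) powr (2 - \<rho>) * (R^2 * S powr (\<rho> - 2)) powr (\<rho> - 1)
       = (R powr (2 - \<rho>) * R powr (2 * (\<rho> - 1))) * (S powr ((\<rho> - 1) * (2 - \<rho>)) * S powr ((\<rho> - 2) * (\<rho> - 1)))"
    unfolding p1 p2 by (simp only: mult_ac)
  also have "\<dots> = R powr \<rho>" unfolding e1 e2 by simp
  finally show ?thesis using Y by simp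
qed

lemma riesz:
  fixes \<rho> :: real and c :: "nat \<Rightarrow> real"
  assumes rho: "1 < \<rho>" "\<rho> \<le> 2" and c: "\<And>i. i \<in> {1..n} \<Longrightarrow> \<bar>c i\<bar> \<le> 1"
    and cs: "(\<rho> - 1) * (\<Sum>i\<in>{1..n}. (c i)^2) \<le> 1"
  defines "R \<equiv> (\<lambda>x. \<Prod>i\<in>{1..n}. (1 + c i * x i))"
  shows "\<And>x. x \<in> cube n \<Longrightarrow> R x \<ge> 0"
    and "expect n R = 1"
    and "\<And>j. j \<in> {1..n} \<Longrightarrow> expect n (\<lambda>x. R x * x j) = c j"
    and "expect n (\<lambda>x. R x powr \<rho>) \<le> exp 1"
proof -
  show Rnn: "R x \<ge> 0" if x: "x \<in> cube n" for x
    unfolding R_def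
  proof (rule prod_nonneg)
    fix i assume i: "i \<in> {1..n}"
    have "\<bar>c i * x i\<bar> \<le> 1" using c[OF i] cube_coord_abs[OF x i] by (simp add: abs_mult)
    thus "0 \<le> 1 + c i * x i" by linarith
  qed
  show "expect n R = 1"
    unfolding R_def using expect_prod[of n "\<lambda>i y. 1 + c i * y"] by simp
  show "expect n (\<lambda>x. R x * x j) = c j" if j: "j \<in> {1..n}" for j
  proof -
    have "expect n (\<lambda>x. R x * x j) = expect n (\<lambda>x. \<Prod>i\<in>{1..n}. (1 + c i * x i) * (if i = j then x i else 1))"
    proof -
      have j': "Suc 0 \<le> j \<and> j \<le> n" using j by simp
      show ?thesis unfolding R_def by (simp add: prod.distrib prod.delta j')
    qed
    also have "\<dots> = (\<Prod>i\<in>{1..n}. if i = j then c i else 1)"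
      by (subst expect_prod) (rule prod.cong, auto)
    also have "\<dots> = c j" using j by (subst prod.delta) auto
    finally show ?thesis .
  qed
  define S where "S = expect n (\<lambda>x. (R x)^2)"
  have S_eq: "S = (\<Prod>i\<in>{1..n}. 1 + (c i)^2)"
  proof -
    have "S = expect n (\<lambda>x. \<Prod>i\<in>{1..n}. (1 + c i * x i)^2)"
      unfolding S_def R_def by (simp add: prod_power_distrib)
    also have "\<dots> = (\<Prod>i\<in>{1..n}. ((1 + c i * 1)^2 + (1 + c i * (-1))^2) / 2)"
      by (rule expect_prod)
    also have "\<dots> = (\<Prod>i\<in>{1..n}. 1 + (c i)^2)"
      by (rule prod.cong) (auto simp: power2_eq_square algebra_simps)
    finally show ?thesis .
  qed
  have S1: "S \<ge> 1" unfolding S_eq by (rule prod_ge_1) simp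
  have Sexp: "S \<le> exp (\<Sum>i\<in>{1..n}. (c i)^2)"
    unfolding S_eq exp_sum[OF finite_atLeastAtMost]
    by (rule prod_mono) (auto simp: add_nonneg_nonneg)
  have "expect n (\<lambda>x. R x powr \<rho>) \<le>
      expect n (\<lambda>x. (2 - \<rho>) * (R x * S powr (\<rho> - 1)) + (\<rho> - 1) * ((R x)^2 * S powr (\<rho> - 2)))"
    by (rule expect_mono) (rule young_pt[OF Rnn _ rho], auto intro: order.strict_trans2[OF _ S1])
  also have "\<dots> = (2 - \<rho>) * (expect n R * S powr (\<rho> - 1)) + (\<rho> - 1) * (S * S powr (\<rho> - 2))"
    by (simp add: expect_add expect_cmult expect_multc S_def)
  also have "\<dots> = S powr (\<rho> - 1)"
  proof -
    have "S * S powr (\<rho> - 2) = S powr (\<rho> - 1)"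
      using S1 by (simp add: powr_add[symmetric] powr_mult_base)
    thus ?thesis using \<open>expect n R = 1\<close> by (simp add: algebra_simps)
  qed
  also have "\<dots> \<le> exp (\<Sum>i\<in>{1..n}. (c i)^2) powr (\<rho> - 1)"
    by (rule powr_mono2) (use rho S1 Sexp in auto)
  also have "\<dots> = exp ((\<rho> - 1) * (\<Sum>i\<in>{1..n}. (c i)^2))"
    by (simp add: exp_powr_real mult.commute)
  also have "\<dots> \<le> exp 1" using cs by simp
  finally show "expect n (\<lambda>x. R x powr \<rho>) \<le> exp 1" .
qed

fun mS :: "nat \<Rightarrow> (nat \<Rightarrow> real) \<Rightarrow> real \<Rightarrow> nat \<Rightarrow> (nat \<Rightarrow> real) \<Rightarrow> real" where
  "mS n b K 0 x = 0"
| "mS n b K (Suc k) x = mS n b K k x + b (Suc k) * x (Suc k) *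
     (if \<bar>mS n b K k x\<bar> \<le> K then 1 / expect n (\<lambda>y. if \<bar>mS n b K k y\<bar> \<le> K then 1 else 0) else 0)"

definition mP where "mP n b K k = expect n (\<lambda>y. if \<bar>mS n b K k y\<bar> \<le> K then 1 else 0)"
definition mw where "mw n b K k x = (if \<bar>mS n b K k x\<bar> \<le> K then 1 / mP n b K k else 0)"

lemma mS_Suc': "mS n b K (Suc k) x = mS n b K k x + b (Suc k) * x (Suc k) * mw n b K k x"
  by (simp add: mw_def mP_def)

declare mS.simps(2)[simp del]

lemma mS_indep: "j > k \<Longrightarrow> mS n b K k (x(j := v)) = mS n b K k x"
  by (induction k) (auto simp: mS_Suc' mw_def)

lemma mw_indep: "j > k \<Longrightarrow> mw n b K k (x(j := v)) = mw n b K k x"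
  by (simp add: mw_def mS_indep)

context
  fixes n :: nat and b :: "nat \<Rightarrow> real" and K :: real
  assumes Kdef: "K = 2 * sqrt (\<Sum>i\<in>{1..n}. (b i)^2)"
    and Bpos: "(\<Sum>i\<in>{1..n}. (b i)^2) > 0"
begin

abbreviation "B2 \<equiv> (\<Sum>i\<in>{1..n}. (b i)^2)"
abbreviation "S \<equiv> mS n b K"
abbreviation "P \<equiv> mP n b K"
abbreviation "w \<equiv> mw n b K"

lemma K_pos: "K > 0" using Bpos Kdef by simp

lemma K_sq: "K^2 = 4 * B2" using Bpos Kdef by (simp add: power_mult_distrib)

lemma P_ge: "P k \<ge> 1 - expect n (\<lambda>x. (S k x)^2) / K^2"
proof -
  have "expect n (\<lambda>x. 1 - (S k x)^2 / K^2) \<le> P k"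
    unfolding mP_def
  proof (rule expect_mono)
    fix x
    show "1 - (S k x)^2 / K^2 \<le> (if \<bar>S k x\<bar> \<le> K then 1 else 0)"
    proof (cases "\<bar>S k x\<bar> \<le> K")
      case True thus ?thesis using K_pos by simp
    next
      case False
      hence "K^2 \<le> (S k x)^2" using K_pos by (simp add: abs_le_square_iff[symmetric] abs_of_pos) 
      thus ?thesis using False K_pos by simp
    qed
  qed
  thus ?thesis by (simp add: expect_diff expect_multc divide_inverse)
qed

lemma partial_le: "k \<le> n \<Longrightarrow> (\<Sum>i\<in>{1..k}. (b i)^2) \<le> B2"
  by (rule sum_mono2) auto

lemma main_inv: "k \<le> n \<Longrightarrow> expect n (\<lambda>x. (S k x)^2) \<le> 2 * (\<Sum>i\<in>{1..k}. (b i)^2)"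
proof (induction k)
  case 0 thus ?case by simp
next
  case (Suc k)
  hence kn: "k < n" and IH: "expect n (\<lambda>x. (S k x)^2) \<le> 2 * (\<Sum>i\<in>{1..k}. (b i)^2)" by auto
  have Pk: "P k \<ge> 1/2"
  proof -
    have "expect n (\<lambda>x. (S k x)^2) / K^2 \<le> 2 * B2 / (4 * B2)"
      unfolding K_sq using IH partial_le[of k] kn K_pos Bpos
      by (intro divide_right_mono) auto
    also have "\<dots> = 1/2" using Bpos by simp
    finally show ?thesis using P_ge[of k] by simp
  qed
  have i: "Suc k \<in> {1..n}" using kn by simp
  have cross: "expect n (\<lambda>x. x (Suc k) * (S k x * w k x)) = 0"
    by (rule expect_flip[OF i]) (simp add: mS_indep mw_indep)
  have ww: "expect n (\<lambda>x. (w k x)^2) = 1 / P k"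
  proof -
    have "expect n (\<lambda>x. (w k x)^2) = expect n (\<lambda>x. (if \<bar>S k x\<bar> \<le> K then 1 else 0) * (1 / P k)^2)"
      by (rule expect_cong) (simp add: mw_def)
    also have "\<dots> = P k * (1 / P k)^2" by (simp add: expect_multc mP_def)
    also have "\<dots> = 1 / P k" using Pk by (simp add: power2_eq_square)
    finally show ?thesis .
  qed
  have "expect n (\<lambda>x. (S (Suc k) x)^2) =
      expect n (\<lambda>x. (S k x)^2 + 2 * b (Suc k) * (x (Suc k) * (S k x * w k x)) + (b (Suc k))^2 * (x (Suc k) * x (Suc k)) * (w k x)^2)"
    by (rule expect_cong) (simp add: mS_Suc' power2_eq_square algebra_simps)
  also have "\<dots> = expect n (\<lambda>x. (S k x)^2 + 2 * b (Suc k) * (x (Suc k) * (S k x * w k x)) + (b (Suc k))^2 * (w k x)^2)"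
    by (rule expect_cong) (simp add: cube_coord_sq[OF _ i])
  also have "\<dots> = expect n (\<lambda>x. (S k x)^2) + (b (Suc k))^2 * (1 / P k)"
    by (simp add: expect_add expect_cmult cross ww)
  also have "\<dots> \<le> 2 * (\<Sum>i\<in>{1..k}. (b i)^2) + (b (Suc k))^2 * 2"
  proof -
    have "1 / P k \<le> 2" using Pk by (simp add: divide_le_eq)
    hence "(b (Suc k))^2 * (1 / P k) \<le> (b (Suc k))^2 * 2" by (rule mult_left_mono) simp
    thus ?thesis using IH by linarith
  qed
  also have "\<dots> = 2 * (\<Sum>i\<in>{1..Suc k}. (b i)^2)" by simp
  finally show ?case .
qed

lemma P_half: "k \<le> n \<Longrightarrow> P k \<ge> 1/2"
proof -
  assume kn: "k \<le> n"
  have "expect n (\<lambda>x. (S k x)^2) / K^2 \<le> 2 * B2 / (4 * B2)"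
    unfolding K_sq using main_inv[OF kn] partial_le[OF kn] Bpos
    by (intro divide_right_mono) auto
  also have "\<dots> = 1/2" using Bpos by simp
  finally show ?thesis using P_ge[of k] by simp
qed

lemma S_bound:
  assumes M: "\<And>i. i \<in> {1..n} \<Longrightarrow> \<bar>b i\<bar> \<le> M" and M0: "0 \<le> M" and x: "x \<in> cube n"
  shows "k \<le> n \<Longrightarrow> \<bar>S k x\<bar> \<le> K + 2 * M"
proof (induction k)
  case 0
  show ?case using K_pos M0 by simp
next
  case (Suc k)
  hence kn: "k < n" by simp
  have i: "Suc k \<in> {1..n}" using kn by simp
  show ?case
  proof (cases "\<bar>S k x\<bar> \<le> K")
    case True
    have Pk: "P k \<ge> 1/2" using P_half kn by simp
    have "\<bar>b (Suc k) * x (Suc k) * w k x\<bar> = \<bar>b (Suc k)\<bar> * (1 / P k)"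
      using True Pk by (simp add: mw_def abs_mult cube_coord_abs[OF x i])
    also have "\<dots> \<le> M * 2"
      using M[OF i] Pk by (intro mult_mono) (auto simp: divide_le_eq)
    finally show ?thesis using True by (simp add: mS_Suc')
  next
    case False
    thus ?thesis using Suc by (simp add: mS_Suc' mw_def)
  qed
qed

lemma S_coeffs:
  "k \<le> n \<Longrightarrow> expect n (S k) = 0 \<and> (\<forall>j\<in>{1..n}. expect n (\<lambda>x. S k x * x j) = (if j \<le> k then b j else 0))"
proof (induction k)
  case 0 thus ?case by simp
next
  case (Suc k)
  hence kn: "k < n" and IH0: "expect n (S k) = 0"
    and IH1: "\<And>j. j \<in> {1..n} \<Longrightarrow> expect n (\<lambda>x. S k x * x j) = (if j \<le> k then b j else 0)" by auto
  have i: "Suc k \<in> {1..n}" using kn by simp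
  have Pk: "P k \<ge> 1/2" using P_half kn by simp
  have Ew: "expect n (w k) = 1"
  proof -
    have "expect n (w k) = expect n (\<lambda>x. (if \<bar>S k x\<bar> \<le> K then 1 else 0) * (1 / P k))"
      by (rule expect_cong) (simp add: mw_def)
    also have "\<dots> = P k * (1 / P k)" by (simp only: expect_multc mP_def)
    also have "\<dots> = 1" using Pk by simp
    finally show ?thesis .
  qed
  have E0: "expect n (\<lambda>x. x (Suc k) * w k x) = 0"
    by (rule expect_flip[OF i]) (simp add: mw_indep)
  have "expect n (S (Suc k)) = expect n (S k) + b (Suc k) * expect n (\<lambda>x. x (Suc k) * w k x)"
  proof -
    have "expect n (S (Suc k)) = expect n (\<lambda>x. S k x + b (Suc k) * (x (Suc k) * w k x))"
      by (rule expect_cong) (simp add: mS_Suc' mult.assoc)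
    thus ?thesis by (simp add: expect_add expect_cmult)
  qed
  hence A: "expect n (S (Suc k)) = 0" using IH0 E0 by simp
  have Bj: "expect n (\<lambda>x. S (Suc k) x * x j) = (if j \<le> Suc k then b j else 0)" if j: "j \<in> {1..n}" for j
  proof -
    have "expect n (\<lambda>x. S (Suc k) x * x j) = expect n (\<lambda>x. S k x * x j) + b (Suc k) * expect n (\<lambda>x. x (Suc k) * w k x * x j)"
      by (simp add: mS_Suc' expect_add distrib_right mult.assoc expect_cmult)
    also have "expect n (\<lambda>x. x (Suc k) * w k x * x j) = (if j = Suc k then 1 else 0)"
    proof (cases "j = Suc k")
      case True
      have "expect n (\<lambda>x. x (Suc k) * w k x * x j) = expect n (w k)"
        by (rule expect_cong) (simp add: True cube_coord_sq[OF _ i] mult.commute mult.left_commute)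
      thus ?thesis using Ew True by simp
    next
      case False
      show ?thesis
      proof (cases "j \<le> k")
        case True
        have "expect n (\<lambda>x. x (Suc k) * w k x * x j) = expect n (\<lambda>x. x (Suc k) * (w k x * x j))"
          by (simp add: mult.assoc)
        also have "\<dots> = 0"
          by (rule expect_flip[OF i]) (use True in \<open>simp add: mw_indep\<close>)
        finally show ?thesis using False by simp
      next
        case jk: False
        have "expect n (\<lambda>x. x (Suc k) * w k x * x j) = expect n (\<lambda>x. x j * (x (Suc k) * w k x))"
          by (simp add: mult.commute)
        also have "\<dots> = 0"
          by (rule expect_flip[OF j]) (use jk False in \<open>simp add: mw_indep\<close>)
        finally show ?thesis using False by simp
      qed
    qed
    finally show ?thesis using IH1[OF j] by (cases "j = Suc k") auto
  qed
  show ?case using A Bj by blast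
qed

end

lemma linf_construction:
  fixes b :: "nat \<Rightarrow> real" and M :: real
  assumes M: "\<And>i. i \<in> {1..n} \<Longrightarrow> \<bar>b i\<bar> \<le> M" "M \<ge> 0"
  shows "\<exists>h. expect n h = 0 \<and> (\<forall>j\<in>{1..n}. expect n (\<lambda>x. h x * x j) = b j) \<and>
     (\<forall>x\<in>cube n. \<bar>h x\<bar> \<le> 2 * sqrt (\<Sum>i\<in>{1..n}. (b i)^2) + 2 * M)"
proof (cases "(\<Sum>i\<in>{1..n}. (b i)^2) = 0")
  case True
  hence "\<forall>i\<in>{1..n}. b i = 0"
    using sum_nonneg_eq_0_iff[of "{1..n}" "\<lambda>i. (b i)^2"] by simp
  thus ?thesis using M by (intro exI[of _ "\<lambda>x. 0"]) auto
next
  case False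
  hence Bpos: "(\<Sum>i\<in>{1..n}. (b i)^2) > 0" by (simp add: order_le_neq_trans sum_nonneg)
  define K where "K = 2 * sqrt (\<Sum>i\<in>{1..n}. (b i)^2)"
  show ?thesis
    using S_coeffs[OF K_def Bpos order_refl] S_bound[OF K_def Bpos M(1) M(2) _ order_refl]
    by (intro exI[of _ "mS n b K n"]) (auto simp: K_def)
qed

lemma g_from_h:
  assumes Eh: "expect n h = expect n f"
    and Ehx: "\<And>j. j \<in> {1..n} \<Longrightarrow> expect n (\<lambda>x. h x * x j) = fourier n f {j}"
  shows "(\<lambda>x. f x - h x) \<in> P_gt1 n"
  unfolding P_gt1_def
proof (intro CollectI allI impI, elim conjE)
  fix S assume S: "S \<subseteq> {1..n}" "card S \<le> 1"
  hence "finite S" using finite_subset by blast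
  then consider "S = {}" | i where "S = {i}" using card_le1_cases[OF S(2)] by blast
  thus "fourier n (\<lambda>x. f x - h x) S = 0"
  proof cases
    case 1 thus ?thesis by (simp add: fourier_diff fourier_empty Eh)
  next
    case (2 i)
    hence "i \<in> {1..n}" using S by auto
    thus ?thesis using 2 Ehx[of i] by (simp add: fourier_diff fourier_single)
  qed
qed

lemma INF_le_of:
  assumes "g \<in> P_gt1 n" "Lnorm n r (\<lambda>x. f x - g x) \<le> X"
  shows "(INF g\<in>P_gt1 n. Lnorm n r (\<lambda>x. f x - g x)) \<le> X"
proof -
  have "(INF g\<in>P_gt1 n. Lnorm n r (\<lambda>x. f x - g x)) \<le> Lnorm n r (\<lambda>x. f x - g x)"
    by (rule cINF_lower[OF _ assms(1)]) (auto intro: bdd_belowI2[where m = 0] simp: Lnorm_nonneg)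
  thus ?thesis using assms(2) by simp
qed

lemma pow_one_plus:
  fixes R \<rho> :: real
  assumes R: "R \<ge> 0" and rho: "1 < \<rho>" "\<rho> \<le> 2"
  shows "(1 + R) powr \<rho> \<le> 4 * (1 + R powr \<rho>)"
proof -
  have two: "(2::real) powr \<rho> \<le> 4"
  proof -
    have "(2::real) powr \<rho> \<le> 2 powr 2" using rho by (intro powr_mono) auto
    thus ?thesis by simp
  qed
  show ?thesis
  proof (cases "R \<le> 1")
    case True
    have "(1 + R) powr \<rho> \<le> 2 powr \<rho>" using True R rho by (intro powr_mono2) auto
    also have "\<dots> \<le> 4" by (rule two)
    also have "\<dots> \<le> 4 * (1 + R powr \<rho>)" by simp
    finally show ?thesis .
  next
    case False
    have "(1 + R) powr \<rho> \<le> (2 * R) powr \<rho>" using False R rho by (intro powr_mono2) auto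
    also have "\<dots> = 2 powr \<rho> * R powr \<rho>" using R by (simp add: powr_mult)
    also have "\<dots> \<le> 4 * R powr \<rho>" by (rule mult_right_mono[OF two]) simp
    also have "\<dots> \<le> 4 * (1 + R powr \<rho>)" by simp
    finally show ?thesis .
  qed
qed

lemma upper:
  assumes r: "1 < r"
  shows "\<exists>g\<in>P_gt1 n. Lnorm n r (\<lambda>x. f x - g x) \<le> 48 * Qfun n r f"
proof -
  define a where "a = expect n f"
  define b where "b = (\<lambda>i. fourier n f {i})"
  define M where "M = Max (insert 0 ((\<lambda>i. \<bar>fourier n f {i}\<bar>) ` {1..n}))"
  define B2 where "B2 = (\<Sum>i\<in>{1..n}. (b i)^2)"
  define s where "s = sqrt (rfactor r)"
  have Q: "Qfun n r f = \<bar>a\<bar> + M + s * sqrt B2"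
    by (simp add: Qfun_def a_def M_def s_def B2_def b_def)
  have M0: "M \<ge> 0" unfolding M_def by (rule Max_ge) auto
  have Mb: "\<bar>b i\<bar> \<le> M" if "i \<in> {1..n}" for i
    unfolding M_def b_def by (rule Max_ge) (use that in auto)
  have B20: "B2 \<ge> 0" unfolding B2_def by (simp add: sum_nonneg)
  have s0: "s \<ge> 0"
    using r by (cases r) (auto simp: s_def rfactor_def)
  have Q0: "\<bar>a\<bar> + M + s * sqrt B2 \<ge> \<bar>a\<bar>" using M0 s0 B20 by simp
  have fin: "\<exists>g\<in>P_gt1 n. Lnorm n r (\<lambda>x. f x - g x) \<le> 48 * Qfun n r f"
    if h1: "expect n h = a" "\<And>j. j \<in> {1..n} \<Longrightarrow> expect n (\<lambda>x. h x * x j) = b j"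
      and hb: "Lnorm n r h \<le> 48 * Qfun n r f" for h
  proof (intro bexI[of _ "\<lambda>x. f x - h x"])
    show "(\<lambda>x. f x - h x) \<in> P_gt1 n"
      by (rule g_from_h) (use h1 in \<open>auto simp: a_def b_def\<close>)
    show "Lnorm n r (\<lambda>x. f x - (f x - h x)) \<le> 48 * Qfun n r f" using hb by simp
  qed
  show ?thesis
  proof (cases "r = \<infinity> \<or> r > 2")
    case True
    have rf: "rfactor r \<ge> 4/9"
    proof (cases r)
      case (real \<rho>)
      hence "\<rho> > 2" using True by auto
      thus ?thesis using real by (simp add: rfactor_def field_simps)
    qed (use True r in \<open>auto simp: rfactor_def\<close>)
    have s23: "2/3 \<le> s" unfolding s_def by (rule real_le_rsqrt) (use rf in \<open>simp add: power2_eq_square\<close>)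
    obtain h1 where h1: "expect n h1 = 0" "\<And>j. j \<in> {1..n} \<Longrightarrow> expect n (\<lambda>x. h1 x * x j) = b j"
      "\<And>x. x \<in> cube n \<Longrightarrow> \<bar>h1 x\<bar> \<le> 2 * sqrt B2 + 2 * M"
      using linf_construction[of n b M, OF Mb M0] unfolding B2_def by blast
    show ?thesis
    proof (rule fin[of "\<lambda>x. a + h1 x"])
      show "expect n (\<lambda>x. a + h1 x) = a" using h1(1) by (simp add: expect_add)
      show "expect n (\<lambda>x. (a + h1 x) * x j) = b j" if j: "j \<in> {1..n}" for j
        using h1(2)[OF j] expect_coord[OF j] by (simp add: distrib_right expect_add expect_cmult)
      have "Lnorm n r (\<lambda>x. a + h1 x) \<le> \<bar>a\<bar> + (2 * sqrt B2 + 2 * M)"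
        by (rule Lnorm_le_const[OF r]) (use h1(3) M0 B20 in \<open>auto intro: order_trans[OF abs_triangle_ineq] add_left_mono\<close>)
      also have "\<dots> \<le> 48 * (\<bar>a\<bar> + M + s * sqrt B2)"
      proof -
        have "(2/3) * sqrt B2 \<le> s * sqrt B2"
          using s23 B20 by (intro mult_right_mono) auto
        moreover have "0 \<le> s * sqrt B2" using s0 B20 by simp
        moreover have "0 \<le> \<bar>a\<bar>" by simp
        moreover have "48 * (\<bar>a\<bar> + M + s * sqrt B2) = 48 * \<bar>a\<bar> + 48 * M + 48 * (s * sqrt B2)"
          by (simp add: algebra_simps)
        ultimately show ?thesis using M0 by linarith
      qed
      finally show "Lnorm n r (\<lambda>x. a + h1 x) \<le> 48 * Qfun n r f" using Q by simp
    qed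
  next
    case False
    then obtain \<rho> where rho_def: "r = ereal \<rho>" and rho: "1 < \<rho>" "\<rho> \<le> 2"
      using r by (cases r) auto
    define lam where "lam = M + sqrt (\<rho> - 1) * sqrt B2"
    have sr: "sqrt (\<rho> - 1) \<le> 1.5 * s"
    proof -
      have "sqrt (\<rho> - 1) = sqrt \<rho> * s"
        using rho by (simp add: s_def rho_def rfactor_def real_sqrt_mult[symmetric])
      also have "\<dots> \<le> 1.5 * s"
        by (intro mult_right_mono real_le_lsqrt) (use rho s0 in \<open>auto simp: power2_eq_square\<close>)
      finally show ?thesis .
    qed
    have lam0: "lam \<ge> 0" using M0 B20 rho by (simp add: lam_def)
    show ?thesis
    proof (cases "lam = 0")
      case True
      moreover have "0 \<le> sqrt (\<rho> - 1) * sqrt B2" using rho B20 by simp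
      ultimately have "M = 0" "sqrt (\<rho> - 1) * sqrt B2 = 0" using M0 unfolding lam_def by linarith+
      hence "B2 = 0" using rho by simp
      hence b0: "\<forall>i\<in>{1..n}. b i = 0" unfolding B2_def
        using sum_nonneg_eq_0_iff[of "{1..n}" "\<lambda>i. (b i)^2"] by simp
      show ?thesis
      proof (rule fin[of "\<lambda>x. a"])
        show "expect n (\<lambda>x. a) = a" by simp
        show "expect n (\<lambda>x. a * x j) = b j" if j: "j \<in> {1..n}" for j
          using b0 j expect_coord[OF j] by (simp add: expect_cmult)
        have "Lnorm n r (\<lambda>x. a) \<le> \<bar>a\<bar>" by (rule Lnorm_le_const[OF r]) auto
        also have "\<dots> \<le> 48 * Qfun n r f" using Q Q0 by simp
        finally show "Lnorm n r (\<lambda>x. a) \<le> 48 * Qfun n r f" .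
      qed
    next
      case False
      hence lp: "lam > 0" using lam0 by simp
      define c where "c = (\<lambda>i. b i / lam)"
      have c1: "\<bar>c i\<bar> \<le> 1" if i: "i \<in> {1..n}" for i
      proof -
        have "0 \<le> sqrt (\<rho> - 1) * sqrt B2" using rho B20 by simp
        hence "\<bar>b i\<bar> \<le> lam" unfolding lam_def using Mb[OF i] by linarith
        hence "\<bar>b i\<bar> / lam \<le> 1" using lp by (simp add: pos_divide_le_eq)
        moreover have "\<bar>c i\<bar> = \<bar>b i\<bar> / lam" using lp by (simp add: c_def abs_divide)
        ultimately show ?thesis by simp
      qed
      have cs: "(\<rho> - 1) * (\<Sum>i\<in>{1..n}. (c i)^2) \<le> 1"
      proof -
        have "(\<Sum>i\<in>{1..n}. (c i)^2) = B2 / lam^2"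
          by (simp add: c_def B2_def power_divide sum_divide_distrib)
        moreover have "(\<rho> - 1) * B2 \<le> lam^2"
        proof -
          have "(\<rho> - 1) * B2 = (sqrt (\<rho> - 1) * sqrt B2)^2"
            using rho B20 by (simp add: power_mult_distrib)
          also have "\<dots> \<le> lam^2"
            using M0 B20 rho by (intro power_mono) (auto simp: lam_def)
          finally show ?thesis .
        qed
        ultimately show ?thesis using lp by (simp add: pos_divide_le_eq)
      qed
      define R where "R = (\<lambda>x. \<Prod>i\<in>{1..n}. (1 + c i * x i))"
      have RR1: "\<And>x. x \<in> cube n \<Longrightarrow> R x \<ge> 0"
        unfolding R_def by (rule riesz(1)) (use rho c1 cs in auto)
      have RR2: "expect n R = 1"
        unfolding R_def by (rule riesz(2)) (use rho c1 cs in auto)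
      have RR3: "\<And>j. j \<in> {1..n} \<Longrightarrow> expect n (\<lambda>x. R x * x j) = c j"
        unfolding R_def by (rule riesz(3)) (use rho c1 cs in auto)
      have RR4: "expect n (\<lambda>x. R x powr \<rho>) \<le> exp 1"
        unfolding R_def by (rule riesz(4)) (use rho c1 cs in auto)
      note RR = RR1 RR2 RR3 RR4
      show ?thesis
      proof (rule fin[of "\<lambda>x. a + lam * (R x - 1)"])
        show "expect n (\<lambda>x. a + lam * (R x - 1)) = a"
          using RR(2) by (simp add: expect_add expect_cmult expect_diff)
        show "expect n (\<lambda>x. (a + lam * (R x - 1)) * x j) = b j" if j: "j \<in> {1..n}" for j
        proof -
          have "expect n (\<lambda>x. (a + lam * (R x - 1)) * x j) =
              expect n (\<lambda>x. a * x j + lam * (R x * x j - x j))"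
            by (rule expect_cong) (simp add: algebra_simps)
          also have "\<dots> = a * expect n (\<lambda>x. x j) + lam * (expect n (\<lambda>x. R x * x j) - expect n (\<lambda>x. x j))"
            by (simp only: expect_add expect_cmult expect_diff)
          finally show ?thesis using RR3[OF j] expect_coord[OF j] lp by (simp add: c_def)
        qed
        have "Lnorm n (ereal \<rho>) (\<lambda>x. a + lam * (R x - 1)) \<le> (\<bar>a\<bar> + 2 * lam) * 16 powr (1/\<rho>)"
        proof (rule Lnorm_le_fin[where G = "\<lambda>x. 1 + R x"])
          show "0 < \<rho>" using rho by simp
          show "0 \<le> \<bar>a\<bar> + 2 * lam" using lp by simp
          show "0 \<le> 1 + R x" if "x \<in> cube n" for x using RR(1)[OF that] by simp
          show "\<bar>a + lam * (R x - 1)\<bar> \<le> (\<bar>a\<bar> + 2 * lam) * (1 + R x)" if x: "x \<in> cube n" for x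
          proof -
            have R0: "R x \<ge> 0" by (rule RR(1)[OF x])
            have e: "lam * (R x - 1) = lam * R x - lam" by (simp add: right_diff_distrib)
            have n1: "0 \<le> lam * R x" using lp R0 by simp
            have n2: "0 \<le> \<bar>a\<bar> * R x" using R0 by simp
            have "\<bar>a + lam * (R x - 1)\<bar> \<le> \<bar>a\<bar> + lam * R x + lam"
              unfolding e using n1 lp by arith
            also have "\<dots> \<le> \<bar>a\<bar> + \<bar>a\<bar> * R x + 2 * lam + 2 * (lam * R x)"
              using n1 n2 lp by linarith
            also have "\<dots> = (\<bar>a\<bar> + 2 * lam) * (1 + R x)"
              by (simp add: algebra_simps)
            finally show ?thesis .
          qed
          have "expect n (\<lambda>x. (1 + R x) powr \<rho>) \<le> expect n (\<lambda>x. 4 * (1 + R x powr \<rho>))"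
            by (rule expect_mono) (rule pow_one_plus[OF RR(1) rho])
          also have "\<dots> = 4 * (1 + expect n (\<lambda>x. R x powr \<rho>))"
            by (simp only: expect_cmult expect_add expect_const)
          also have "\<dots> = 4 + 4 * expect n (\<lambda>x. R x powr \<rho>)"
            by (simp only: distrib_left mult_1_right)
          also have "\<dots> \<le> 4 + 4 * 3" using RR(4) exp_le by simp
          finally show "expect n (\<lambda>x. (1 + R x) powr \<rho>) \<le> 16" by simp
        qed
        also have "\<dots> \<le> (\<bar>a\<bar> + 2 * lam) * 16"
        proof (rule mult_left_mono)
          show "(16::real) powr (1/\<rho>) \<le> 16"
            using powr_mono[of "1/\<rho>" 1 16] rho by simp
        qed (use lp in simp)
        also have "\<dots> \<le> 48 * (\<bar>a\<bar> + M + s * sqrt B2)"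
        proof -
          have X: "sqrt (\<rho> - 1) * sqrt B2 \<le> 1.5 * (s * sqrt B2)"
            using mult_right_mono[OF sr, of "sqrt B2"] B20 by (simp add: mult.assoc)
          have e1: "(\<bar>a\<bar> + 2 * lam) * 16 = 16 * \<bar>a\<bar> + 32 * M + 32 * (sqrt (\<rho> - 1) * sqrt B2)"
            by (simp add: lam_def algebra_simps)
          have e2: "48 * (\<bar>a\<bar> + M + s * sqrt B2) = 48 * \<bar>a\<bar> + 48 * M + 48 * (s * sqrt B2)"
            by (simp add: algebra_simps)
          have "0 \<le> \<bar>a\<bar>" by simp
          thus ?thesis unfolding e1 e2 using X M0 by linarith
        qed
        finally show "Lnorm n r (\<lambda>x. a + lam * (R x - 1)) \<le> 48 * Qfun n r f"
          using Q rho_def by simp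
      qed
    qed
  qed
qed

lemma both:
  assumes r: "1 < r"
  shows "1/11 * Qfun n r f \<le> (INF g\<in>P_gt1 n. Lnorm n r (\<lambda>x. f x - g x)) \<and>
       (INF g\<in>P_gt1 n. Lnorm n r (\<lambda>x. f x - g x)) \<le> 48 * Qfun n r f"
proof
  show "1/11 * Qfun n r f \<le> (INF g\<in>P_gt1 n. Lnorm n r (\<lambda>x. f x - g x))"
  proof (rule cINF_greatest)
    show "P_gt1 n \<noteq> {}" using zero_in_P by blast
    fix g assume g: "g \<in> P_gt1 n"
    have "Qfun n r f \<le> 11 * Lnorm n r (\<lambda>x. f x - g x)" by (rule lower[OF r g])
    thus "1/11 * Qfun n r f \<le> Lnorm n r (\<lambda>x. f x - g x)" by simp
  qed
  obtain g where "g \<in> P_gt1 n" "Lnorm n r (\<lambda>x. f x - g x) \<le> 48 * Qfun n r f"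
    using upper[OF r] by blast
  thus "(INF g\<in>P_gt1 n. Lnorm n r (\<lambda>x. f x - g x)) \<le> 48 * Qfun n r f"
    by (rule INF_le_of)
qed

theorem theorem1p2:
  shows "\<exists>c C :: real. 0 < c \<and> c \<le> C \<and>
    (\<forall>r :: ereal. 1 < r \<longrightarrow> (\<forall>(n::nat) (f :: (nat \<Rightarrow> real) \<Rightarrow> real).
       c * Qfun n r f \<le> (INF g\<in>P_gt1 n. Lnorm n r (\<lambda>x. f x - g x)) \<and>
       (INF g\<in>P_gt1 n. Lnorm n r (\<lambda>x. f x - g x)) \<le> C * Qfun n r f))"
  by (rule exI[of _ "1/11"], rule exI[of _ 48]) (use both in auto)

end
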